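(* Let $\mathbb S$ be the free semigroup action on the compact metric space $X$ generated by continuous maps $g_1,\dots,g_p$, with entropy function $h_{top}(\cdot)$. (i) If $K\subset X$ is a countable closed subset with a unique limit point $x_0$, then $h_{top}(x_0)\ge h_{top}(K,\mathbb S)$. (ii) For every $x_0\in X$ there exists a countable closed subset $K\subset X$ with $x_0\in K$ such that $x_0$ is the unique limit point of $K$ in $X$ and $h_{top}(x_0)=h_{top}(K,\mathbb S)$.
   Context: Setting: $(X,d)$ compact metric space, $g_1,\dots,g_p:X\to X$ continuous; $G_n^*$ the set of words $\underline g=g_{i_n}\cdots g_{i_1}$, $i_j\in\{1,\dots,p\}$; $d_{\underline g}(x,y)=\max_{0\le j\le n}d(g_{i_j}\cdots g_{i_1}x,g_{i_j}\cdots g_{i_1}y)$; $s(K,\underline g,\varepsilon)$ and $b_d(K,\underline g,\varepsilon)$ are the maximal cardinality of a $(\underline g,\varepsilon)$-separated subset of $K$, resp. the minimal cardinality of a $(\underline g,\varepsilon)$-spanning subset of $K$. $h_{top}(K,\mathbb S)=\lim_{\varepsilon\to0}\limsup_n\frac1n\log\big(p^{-n}\sum_{\underline g\in G_n^*}s(K,\underline g,\varepsilon)\big)$. Entropy function: $B_d(K,\mathbb S,\varepsilon)=\limsup_n\frac1n\log\big(p^{-n}\sum_{\underline g\in G_n^*}b_d(K,\underline g,\varepsilon)\big)$, $h_d(x,\varepsilon)=\inf\{B_d(K,\mathbb S,\varepsilon):K\text{ compact neighbourhood of }x\}$, $h_{top}(x)=\lim_{\varepsilon\to0^+}h_d(x,\varepsilon)$.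 *)

theory Defs
  imports "HOL-Analysis.Analysis"
begin

text \<open>Generators are g 0, ..., g (p-1). A word g_{i_n} ... g_{i_1} of length n is
  represented by the list [i_1, ..., i_n] (first applied map first).\<close>

definition words :: "nat \<Rightarrow> nat \<Rightarrow> nat list set" where
  "words p n = {w. length w = n \<and> set w \<subseteq> {..<p}}"

definition orbit :: "(nat \<Rightarrow> 'a \<Rightarrow> 'a) \<Rightarrow> nat list \<Rightarrow> nat \<Rightarrow> 'a \<Rightarrow> 'a" where
  "orbit g w j x = fold (\<lambda>i y. g i y) (take j w) x"

definition bowen_dist :: "(nat \<Rightarrow> 'a::metric_space \<Rightarrow> 'a) \<Rightarrow> nat list \<Rightarrow> 'a \<Rightarrow> 'a \<Rightarrow> real" where
  "bowen_dist g w x y = Max ((\<lambda>j. dist (orbit g w j x) (orbit g w j y)) ` {0..length w})"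

definition separated :: "(nat \<Rightarrow> 'a::metric_space \<Rightarrow> 'a) \<Rightarrow> nat list \<Rightarrow> real \<Rightarrow> 'a set \<Rightarrow> bool" where
  "separated g w \<epsilon> E \<longleftrightarrow> (\<forall>x\<in>E. \<forall>y\<in>E. x \<noteq> y \<longrightarrow> bowen_dist g w x y > \<epsilon>)"

definition spanning :: "(nat \<Rightarrow> 'a::metric_space \<Rightarrow> 'a) \<Rightarrow> nat list \<Rightarrow> real \<Rightarrow> 'a set \<Rightarrow> 'a set \<Rightarrow> bool" where
  "spanning g w \<epsilon> K F \<longleftrightarrow> (\<forall>x\<in>K. \<exists>y\<in>F. bowen_dist g w x y \<le> \<epsilon>)"

definition sep_num :: "(nat \<Rightarrow> 'a::metric_space \<Rightarrow> 'a) \<Rightarrow> 'a set \<Rightarrow> nat list \<Rightarrow> real \<Rightarrow> nat" where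
  "sep_num g K w \<epsilon> = Sup {card E | E. E \<subseteq> K \<and> finite E \<and> separated g w \<epsilon> E}"

definition span_num :: "(nat \<Rightarrow> 'a::metric_space \<Rightarrow> 'a) \<Rightarrow> 'a set \<Rightarrow> nat list \<Rightarrow> real \<Rightarrow> nat" where
  "span_num g K w \<epsilon> = Inf {card F | F. F \<subseteq> K \<and> finite F \<and> spanning g w \<epsilon> K F}"

definition htop_set :: "(nat \<Rightarrow> 'a::metric_space \<Rightarrow> 'a) \<Rightarrow> nat \<Rightarrow> 'a set \<Rightarrow> ereal" where
  "htop_set g p K = Lim (at_right 0) (\<lambda>\<epsilon>::real.
     limsup (\<lambda>n. ereal (1 / real n * ln ((1 / real p ^ n) *
        (\<Sum>w\<in>words p n. real (sep_num g K w \<epsilon>))))))"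

definition Bd :: "(nat \<Rightarrow> 'a::metric_space \<Rightarrow> 'a) \<Rightarrow> nat \<Rightarrow> 'a set \<Rightarrow> real \<Rightarrow> ereal" where
  "Bd g p K \<epsilon> = limsup (\<lambda>n. ereal (1 / real n * ln ((1 / real p ^ n) *
        (\<Sum>w\<in>words p n. real (span_num g K w \<epsilon>)))))"

definition compact_nbhd :: "'a::metric_space set \<Rightarrow> 'a set \<Rightarrow> 'a \<Rightarrow> bool" where
  "compact_nbhd X K x \<longleftrightarrow> K \<subseteq> X \<and> compact K \<and> (\<exists>U. open U \<and> x \<in> U \<and> U \<inter> X \<subseteq> K)"

definition hd_pt :: "'a::metric_space set \<Rightarrow> (nat \<Rightarrow> 'a \<Rightarrow> 'a) \<Rightarrow> nat \<Rightarrow> 'a \<Rightarrow> real \<Rightarrow> ereal" where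
  "hd_pt X g p x \<epsilon> = Inf {Bd g p K \<epsilon> | K. compact_nbhd X K x}"

definition htop_pt :: "'a::metric_space set \<Rightarrow> (nat \<Rightarrow> 'a \<Rightarrow> 'a) \<Rightarrow> nat \<Rightarrow> 'a \<Rightarrow> ereal" where
  "htop_pt X g p x = Lim (at_right 0) (hd_pt X g p x)"

end

theory Submission
  imports Defs
begin


lemma words_finite: "finite (words p n)"
  unfolding words_def using finite_lists_length_eq[of "{..<p}" n]
  by (simp add: conj_commute)

lemma words_card: "card (words p n) = p ^ n"
  unfolding words_def using card_lists_length_eq[of "{..<p}" n]
  by (simp add: conj_commute)

lemma orbit_0[simp]: "orbit g w 0 x = x"
  by (simp add: orbit_def)

lemma bowen_fin: "finite ((\<lambda>j. dist (orbit g w j x) (orbit g w j y)) ` {0..length w})"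
  by simp

lemma bowen_ge: "j \<le> length w \<Longrightarrow> dist (orbit g w j x) (orbit g w j y) \<le> bowen_dist g w x y"
  unfolding bowen_dist_def by (rule Max_ge) auto

lemma bowen_ge_dist: "dist x y \<le> bowen_dist g w x y"
  using bowen_ge[of 0 w g x y] by simp

lemma bowen_nonneg: "0 \<le> bowen_dist g w x y"
  using bowen_ge_dist[of x y g w] zero_le_dist[of x y] by linarith

lemma bowen_refl[simp]: "bowen_dist g w x x = 0"
  unfolding bowen_dist_def by simp

lemma bowen_sym: "bowen_dist g w x y = bowen_dist g w y x"
  unfolding bowen_dist_def by (simp add: dist_commute)

lemma bowen_triangle: "bowen_dist g w x z \<le> bowen_dist g w x y + bowen_dist g w y z"
proof -
  have "\<forall>j\<in>{0..length w}. dist (orbit g w j x) (orbit g w j z) \<le> bowen_dist g w x y + bowen_dist g w y z"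
  proof
    fix j assume "j \<in> {0..length w}"
    then have j: "j \<le> length w" by simp
    have "dist (orbit g w j x) (orbit g w j z) \<le> dist (orbit g w j x) (orbit g w j y) + dist (orbit g w j y) (orbit g w j z)"
      by (rule dist_triangle)
    also have "\<dots> \<le> bowen_dist g w x y + bowen_dist g w y z"
      using bowen_ge[OF j] add_mono by metis
    finally show "dist (orbit g w j x) (orbit g w j z) \<le> bowen_dist g w x y + bowen_dist g w y z" .
  qed
  then show ?thesis unfolding bowen_dist_def[of g w x z]
    by (subst Max_le_iff) auto
qed

lemma bowen_less: "(\<And>j. j \<le> length w \<Longrightarrow> dist (orbit g w j x) (orbit g w j y) < e) \<Longrightarrow> bowen_dist g w x y < e"
  unfolding bowen_dist_def by (subst Max_less_iff) auto

locale sys =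
  fixes X :: "'a::metric_space set" and g :: "nat \<Rightarrow> 'a \<Rightarrow> 'a" and p :: nat
  assumes cX: "compact X" and p1: "p \<ge> 1"
    and gX: "\<And>i. i < p \<Longrightarrow> continuous_on X (g i) \<and> g i ` X \<subseteq> X"
begin

lemma fold_cont: "set l \<subseteq> {..<p} \<Longrightarrow> continuous_on X (fold (\<lambda>i y. g i y) l) \<and> fold (\<lambda>i y. g i y) l ` X \<subseteq> X"
proof (induction l)
  case Nil
  then show ?case by (simp add: continuous_on_id)
next
  case (Cons a l)
  then have a: "a < p" and l: "set l \<subseteq> {..<p}" by auto
  have e: "fold (\<lambda>i y. g i y) (a # l) = fold (\<lambda>i y. g i y) l \<circ> g a" by simp
  have c1: "continuous_on X (g a)" and i1: "g a ` X \<subseteq> X" using gX[OF a] by auto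
  have c2: "continuous_on X (fold (\<lambda>i y. g i y) l)" and i2: "fold (\<lambda>i y. g i y) l ` X \<subseteq> X"
    using Cons.IH[OF l] by auto
  show ?case unfolding e
    using continuous_on_compose[OF c1 continuous_on_subset[OF c2 i1]] i1 i2
    by (auto simp: image_comp[symmetric] image_subset_iff)
qed

lemma orbit_cont: assumes "w \<in> words p n"
  shows "continuous_on X (orbit g w j) \<and> orbit g w j ` X \<subseteq> X"
proof -
  have "set (take j w) \<subseteq> {..<p}" using assms set_take_subset[of j w] unfolding words_def by auto
  moreover have "orbit g w j = fold (\<lambda>i y. g i y) (take j w)" by (rule ext) (simp add: orbit_def)
  ultimately show ?thesis using fold_cont by simp
qed

lemma bowen_unif: assumes "w \<in> words p n" "e > 0"
  shows "\<exists>d>0. \<forall>x\<in>X. \<forall>y\<in>X. dist x y < d \<longrightarrow> bowen_dist g w x y < e"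
proof -
  have "\<forall>j\<in>{0..length w}. \<exists>d>0. \<forall>x\<in>X. \<forall>y\<in>X. dist x y < d \<longrightarrow> dist (orbit g w j x) (orbit g w j y) < e"
  proof
    fix j
    have "uniformly_continuous_on X (orbit g w j)"
      using compact_uniformly_continuous orbit_cont[OF assms(1)] cX by blast
    then show "\<exists>d>0. \<forall>x\<in>X. \<forall>y\<in>X. dist x y < d \<longrightarrow> dist (orbit g w j x) (orbit g w j y) < e"
      unfolding uniformly_continuous_on_def using assms(2) by (metis dist_commute)
  qed
  then obtain D where D: "\<forall>j\<in>{0..length w}. D j > 0 \<and> (\<forall>x\<in>X. \<forall>y\<in>X. dist x y < D j \<longrightarrow> dist (orbit g w j x) (orbit g w j y) < e)"
    by metis
  define d where "d = Min (D ` {0..length w})"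
  have "d > 0" unfolding d_def using D by (subst Min_gr_iff) auto
  moreover have "\<forall>x\<in>X. \<forall>y\<in>X. dist x y < d \<longrightarrow> bowen_dist g w x y < e"
  proof (intro ballI impI)
    fix x y assume xy: "x \<in> X" "y \<in> X" "dist x y < d"
    show "bowen_dist g w x y < e"
    proof (rule bowen_less)
      fix j assume j: "j \<le> length w"
      have "d \<le> D j" unfolding d_def using j by (intro Min_le) auto
      then show "dist (orbit g w j x) (orbit g w j y) < e" using D j xy by auto
    qed
  qed
  ultimately show ?thesis by blast
qed

end


context sys begin

lemma sep_bound: assumes K: "compact K" "K \<subseteq> X" and w: "w \<in> words p n" and e: "e > 0"
  shows "\<exists>N. \<forall>E. E \<subseteq> K \<and> separated g w e E \<longrightarrow> finite E \<and> card E \<le> N"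
proof -
  obtain d where d: "d > 0" "\<forall>x\<in>X. \<forall>y\<in>X. dist x y < d \<longrightarrow> bowen_dist g w x y < e"
    using bowen_unif[OF w e] by blast
  have "K \<subseteq> (\<Union>c\<in>K. ball c (d/2))" using d(1) by auto
  then obtain D where D: "D \<subseteq> K" "finite D" "K \<subseteq> (\<Union>c\<in>D. ball c (d/2))"
    using compactE_image[OF K(1), of K "\<lambda>c. ball c (d/2)"] by blast
  have "\<forall>E. E \<subseteq> K \<and> separated g w e E \<longrightarrow> finite E \<and> card E \<le> card D"
  proof (intro allI impI)
    fix E assume E: "E \<subseteq> K \<and> separated g w e E"
    then have "\<forall>x\<in>E. \<exists>c\<in>D. x \<in> ball c (d/2)" using D by blast
    then obtain f where f: "\<forall>x\<in>E. f x \<in> D \<and> x \<in> ball (f x) (d/2)"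
      using bchoice[of E "\<lambda>x c. c \<in> D \<and> x \<in> ball c (d/2)"] by blast
    have inj: "inj_on f E"
    proof (rule inj_onI)
      fix x y assume xy: "x \<in> E" "y \<in> E" "f x = f y"
      show "x = y"
      proof (rule ccontr)
        assume ne: "x \<noteq> y"
        have "dist x y \<le> dist x (f x) + dist (f y) y" using xy(3) dist_triangle[of x y "f x"] by (simp add: dist_commute)
        also have "\<dots> < d"
        proof -
          have "dist (f x) x < d/2" "dist (f y) y < d/2" using f xy(1,2) by auto
          then show ?thesis by (simp add: dist_commute)
        qed
        finally have "dist x y < d" .
        then have "bowen_dist g w x y < e" using d(2) xy E K(2) by blast
        moreover have "bowen_dist g w x y > e" using E xy ne unfolding separated_def by blast
        ultimately show False by simp
      qed
    qed
    have sub: "f ` E \<subseteq> D" using f by auto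
    have "finite E" using inj_on_finite[OF inj sub D(2)] .
    moreover have "card E \<le> card D" using card_inj_on_le[OF inj sub D(2)] .
    ultimately show "finite E \<and> card E \<le> card D" by simp
  qed
  then show ?thesis by blast
qed

lemma sep_num_facts: assumes K: "compact K" "K \<subseteq> X" and w: "w \<in> words p n" and e: "e > 0"
  shows "\<exists>E. E \<subseteq> K \<and> finite E \<and> separated g w e E \<and> card E = sep_num g K w e"
    and "\<And>E. E \<subseteq> K \<Longrightarrow> separated g w e E \<Longrightarrow> card E \<le> sep_num g K w e"
proof -
  obtain N where N: "\<forall>E. E \<subseteq> K \<and> separated g w e E \<longrightarrow> finite E \<and> card E \<le> N"
    using sep_bound[OF K w e] by blast
  let ?S = "{card E | E. E \<subseteq> K \<and> finite E \<and> separated g w e E}"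
  have fin: "finite ?S" by (rule finite_subset[of _ "{..N}"]) (use N in auto)
  have ne: "?S \<noteq> {}" using separated_def[of g w e "{}"] by auto
  have eq: "sep_num g K w e = Max ?S" unfolding sep_num_def by (rule cSup_eq_Max[OF fin ne])
  show "\<exists>E. E \<subseteq> K \<and> finite E \<and> separated g w e E \<and> card E = sep_num g K w e"
    using Max_in[OF fin ne] unfolding eq by auto
  show "\<And>E. E \<subseteq> K \<Longrightarrow> separated g w e E \<Longrightarrow> card E \<le> sep_num g K w e"
    unfolding eq using N fin by (intro Max_ge) auto
qed

lemma sep_max_spanning: assumes K: "compact K" "K \<subseteq> X" and w: "w \<in> words p n" and e: "e > 0"
  and E: "E \<subseteq> K" "finite E" "separated g w e E" "card E = sep_num g K w e"
  shows "spanning g w e K E"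
  unfolding spanning_def
proof
  fix y assume y: "y \<in> K"
  show "\<exists>x\<in>E. bowen_dist g w y x \<le> e"
  proof (rule ccontr)
    assume "\<not> ?thesis"
    then have far: "\<forall>x\<in>E. bowen_dist g w y x > e" by auto
    have yE: "y \<notin> E"
    proof
      assume "y \<in> E"
      then have "bowen_dist g w y y > e" using far by blast
      then show False using e by simp
    qed
    have "separated g w e (insert y E)"
      unfolding separated_def
    proof (intro ballI impI)
      fix a b assume ab: "a \<in> insert y E" "b \<in> insert y E" "a \<noteq> b"
      show "e < bowen_dist g w a b"
      proof (cases "a = y")
        case True
        then show ?thesis using ab far by auto
      next
        case False
        note aF = False
        show ?thesis
        proof (cases "b = y")
          case True
          then show ?thesis using ab far aF bowen_sym[of g w a b] by auto
        next
          case False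
          then show ?thesis using ab aF E(3) unfolding separated_def by auto
        qed
      qed
    qed
    then have "card (insert y E) \<le> sep_num g K w e" using sep_num_facts(2)[OF K w e] E y by auto
    then show False using E yE by simp
  qed
qed

lemma span_le_sep: assumes K: "compact K" "K \<subseteq> X" and w: "w \<in> words p n" and e: "e > 0"
  shows "span_num g K w e \<le> sep_num g K w e"
    and "\<exists>F. F \<subseteq> K \<and> finite F \<and> spanning g w e K F"
proof -
  obtain E where E: "E \<subseteq> K" "finite E" "separated g w e E" "card E = sep_num g K w e"
    using sep_num_facts(1)[OF K w e] by blast
  have sp: "spanning g w e K E" using sep_max_spanning[OF K w e E] .
  show "span_num g K w e \<le> sep_num g K w e" unfolding span_num_def E(4)[symmetric]
    by (rule cInf_lower) (use E sp in blast, simp)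
  show "\<exists>F. F \<subseteq> K \<and> finite F \<and> spanning g w e K F" using E sp by blast
qed

lemma span_num_attained: assumes K: "compact K" "K \<subseteq> X" and w: "w \<in> words p n" and e: "e > 0"
  shows "\<exists>F. F \<subseteq> K \<and> finite F \<and> spanning g w e K F \<and> card F = span_num g K w e"
proof -
  let ?S = "{card F | F. F \<subseteq> K \<and> finite F \<and> spanning g w e K F}"
  have "?S \<noteq> {}" using span_le_sep(2)[OF K w e] by auto
  from Inf_nat_def1[OF this] show ?thesis unfolding span_num_def by auto
qed

lemma span_num_lower: assumes "F \<subseteq> K" "finite F" "spanning g w e K F"
  shows "span_num g K w e \<le> card F"
  unfolding span_num_def by (rule cInf_lower) (use assms in blast, simp)

lemma span_pos: assumes K: "compact K" "K \<subseteq> X" "K \<noteq> {}" and w: "w \<in> words p n" and e: "e > 0"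
  shows "1 \<le> span_num g K w e"
proof -
  obtain F where F: "F \<subseteq> K" "finite F" "spanning g w e K F" "card F = span_num g K w e"
    using span_num_attained[OF K(1,2) w e] by blast
  have "F \<noteq> {}" using F(3) K(3) unfolding spanning_def by auto
  then have "card F > 0" using F(2) by (simp add: card_gt_0_iff)
  then show ?thesis using F(4) by simp
qed

lemma sep_pos: assumes K: "compact K" "K \<subseteq> X" "K \<noteq> {}" and w: "w \<in> words p n" and e: "e > 0"
  shows "1 \<le> sep_num g K w e"
  using span_pos[OF assms] span_le_sep(1)[OF K(1,2) w e] by linarith

lemma sep_anti: assumes K: "compact K" "K \<subseteq> X" and w: "w \<in> words p n" and e: "0 < e1" "e1 \<le> e2"
  shows "sep_num g K w e2 \<le> sep_num g K w e1"
proof -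
  obtain E where E: "E \<subseteq> K" "finite E" "separated g w e2 E" "card E = sep_num g K w e2"
    using sep_num_facts(1)[OF K w, of e2] e by auto
  have "separated g w e1 E" unfolding separated_def
  proof (intro ballI impI)
    fix x y assume "x \<in> E" "y \<in> E" "x \<noteq> y"
    then have "e2 < bowen_dist g w x y" using E(3) unfolding separated_def by blast
    then show "e1 < bowen_dist g w x y" using e(2) by linarith
  qed
  then show ?thesis using sep_num_facts(2)[OF K w e(1) E(1)] E(4) by simp
qed

lemma span_anti: assumes K: "compact K" "K \<subseteq> X" and w: "w \<in> words p n" and e: "0 < e1" "e1 \<le> e2"
  shows "span_num g K w e2 \<le> span_num g K w e1"
proof -
  obtain F where F: "F \<subseteq> K" "finite F" "spanning g w e1 K F" "card F = span_num g K w e1"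
    using span_num_attained[OF K w e(1)] by blast
  have "spanning g w e2 K F" unfolding spanning_def
  proof
    fix x assume "x \<in> K"
    then obtain y where "y \<in> F" "bowen_dist g w x y \<le> e1" using F(3) unfolding spanning_def by blast
    then show "\<exists>y\<in>F. bowen_dist g w x y \<le> e2" using e(2) by force
  qed
  then show ?thesis using span_num_lower[OF F(1,2)] F(4) by simp
qed

lemma key_sep_span: assumes K: "compact K" "K \<subseteq> X" and K': "compact K'" "K' \<subseteq> X"
  and F: "finite F" "K \<subseteq> K' \<union> F" and w: "w \<in> words p n" and e: "e > 0"
  shows "sep_num g K w (2*e) \<le> span_num g K' w e + card F"
proof -
  obtain E where E: "E \<subseteq> K" "finite E" "separated g w (2*e) E" "card E = sep_num g K w (2*e)"
    using sep_num_facts(1)[OF K w, of "2*e"] e by auto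
  obtain S where S: "S \<subseteq> K'" "finite S" "spanning g w e K' S" "card S = span_num g K' w e"
    using span_num_attained[OF K' w e] by blast
  have "\<forall>x\<in>E - F. \<exists>s\<in>S. bowen_dist g w x s \<le> e" using S(3) E(1) F(2) unfolding spanning_def by blast
  then obtain f where f: "\<forall>x\<in>E - F. f x \<in> S \<and> bowen_dist g w x (f x) \<le> e"
    using bchoice[of "E - F" "\<lambda>x s. s \<in> S \<and> bowen_dist g w x s \<le> e"] by blast
  have inj: "inj_on f (E - F)"
  proof (rule inj_onI)
    fix x y assume xy: "x \<in> E - F" "y \<in> E - F" "f x = f y"
    show "x = y"
    proof (rule ccontr)
      assume ne: "x \<noteq> y"
      have "bowen_dist g w x y \<le> bowen_dist g w x (f x) + bowen_dist g w (f x) y" by (rule bowen_triangle)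
      also have "\<dots> \<le> 2 * e"
      proof -
        have a: "bowen_dist g w x (f x) \<le> e" using f xy(1) by blast
        have "bowen_dist g w y (f y) \<le> e" using f xy(2) by blast
        then have b: "bowen_dist g w (f x) y \<le> e" using xy(3) bowen_sym[of g w "f x" y] by simp
        from a b show ?thesis by linarith
      qed
      finally have "bowen_dist g w x y \<le> 2*e" .
      moreover have "bowen_dist g w x y > 2*e" using E(3) xy ne unfolding separated_def by blast
      ultimately show False by simp
    qed
  qed
  have "card (E - F) \<le> card S" using card_inj_on_le[OF inj _ S(2)] f by auto
  moreover have "card (E \<inter> F) \<le> card F" using F(1) by (simp add: card_mono)
  moreover have "card E \<le> card (E - F) + card (E \<inter> F)"
    using card_Un_le[of "E-F" "E\<inter>F"] Un_Diff_Int[of E F] by simp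
  ultimately show ?thesis using E(4) S(4) by linarith
qed

end


lemma avg_sum_ge: assumes "\<forall>w\<in>words p n. (1::real) \<le> a w"
  shows "real p ^ n \<le> (\<Sum>w\<in>words p n. a w)"
proof -
  have "real p ^ n = (\<Sum>w\<in>words p n. (1::real))" by (simp add: words_card)
  also have "\<dots> \<le> (\<Sum>w\<in>words p n. a w)" using assms by (intro sum_mono) auto
  finally show ?thesis .
qed

lemma avg_mono: assumes p: "p \<ge> 1" and ab: "\<forall>w\<in>words p n. a w \<le> b w" and a1: "\<forall>w\<in>words p n. (1::real) \<le> a w"
  shows "1 / real n * ln (1 / real p ^ n * (\<Sum>w\<in>words p n. a w))
       \<le> 1 / real n * ln (1 / real p ^ n * (\<Sum>w\<in>words p n. b w))"
proof -
  have pp: "real p ^ n > 0" using p by simp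
  have s1: "real p ^ n \<le> (\<Sum>w\<in>words p n. a w)" using avg_sum_ge[OF a1] .
  have s2: "(\<Sum>w\<in>words p n. a w) \<le> (\<Sum>w\<in>words p n. b w)" using ab by (intro sum_mono) auto
  have pos: "0 < 1 / real p ^ n * (\<Sum>w\<in>words p n. a w)"
  proof -
    have "0 < (\<Sum>w\<in>words p n. a w)" using pp s1 by linarith
    then show ?thesis using pp by simp
  qed
  have le: "1 / real p ^ n * (\<Sum>w\<in>words p n. a w) \<le> 1 / real p ^ n * (\<Sum>w\<in>words p n. b w)"
    using s2 pp by (simp add: divide_right_mono)
  have "ln (1 / real p ^ n * (\<Sum>w\<in>words p n. a w)) \<le> ln (1 / real p ^ n * (\<Sum>w\<in>words p n. b w))"
    using ln_mono[OF le pos] .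
  then show ?thesis by (intro mult_left_mono) auto
qed

lemma avg_nonneg: assumes p: "p \<ge> 1" and a1: "\<forall>w\<in>words p n. (1::real) \<le> a w"
  shows "0 \<le> 1 / real n * ln (1 / real p ^ n * (\<Sum>w\<in>words p n. a w))"
proof -
  have pp: "real p ^ n > 0" using p by simp
  have s1: "real p ^ n \<le> (\<Sum>w\<in>words p n. a w)" using avg_sum_ge[OF a1] .
  then have "1 \<le> 1 / real p ^ n * (\<Sum>w\<in>words p n. a w)" using pp by (simp add: field_simps)
  then show ?thesis by simp
qed

lemma avg_add: assumes p: "p \<ge> 1" and ab: "\<forall>w\<in>words p n. a w \<le> b w + c"
  and a1: "\<forall>w\<in>words p n. (1::real) \<le> a w" and b1: "\<forall>w\<in>words p n. (1::real) \<le> b w" and c: "0 \<le> c"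
  shows "1 / real n * ln (1 / real p ^ n * (\<Sum>w\<in>words p n. a w))
       \<le> 1 / real n * ln (1 / real p ^ n * (\<Sum>w\<in>words p n. b w)) + ln (1 + c) / real n"
proof -
  have pp: "real p ^ n > 0" using p by simp
  have s1: "real p ^ n \<le> (\<Sum>w\<in>words p n. a w)" using avg_sum_ge[OF a1] .
  have s1b: "real p ^ n \<le> (\<Sum>w\<in>words p n. b w)" using avg_sum_ge[OF b1] .
  have "(\<Sum>w\<in>words p n. a w) \<le> (\<Sum>w\<in>words p n. (1 + c) * b w)"
  proof (intro sum_mono)
    fix w assume w: "w \<in> words p n"
    have "c \<le> c * b w" using b1 w c by (metis mult_le_cancel_left1 not_le order_less_le_trans less_eq_real_def mult_cancel_left1)
    moreover have "a w \<le> b w + c" using ab w by blast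
    moreover have "(1 + c) * b w = b w + c * b w" by (simp add: algebra_simps)
    ultimately show "a w \<le> (1 + c) * b w" by linarith
  qed
  also have "\<dots> = (1 + c) * (\<Sum>w\<in>words p n. b w)" by (simp add: sum_distrib_left)
  finally have s2: "(\<Sum>w\<in>words p n. a w) \<le> (1 + c) * (\<Sum>w\<in>words p n. b w)" .
  have pos: "0 < 1 / real p ^ n * (\<Sum>w\<in>words p n. a w)"
  proof -
    have "0 < (\<Sum>w\<in>words p n. a w)" using pp s1 by linarith
    then show ?thesis using pp by simp
  qed
  have posb: "0 < 1 / real p ^ n * (\<Sum>w\<in>words p n. b w)"
  proof -
    have "0 < (\<Sum>w\<in>words p n. b w)" using pp s1b by linarith
    then show ?thesis using pp by simp
  qed
  have le: "1 / real p ^ n * (\<Sum>w\<in>words p n. a w) \<le> (1 + c) * (1 / real p ^ n * (\<Sum>w\<in>words p n. b w))"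
    using s2 pp by (simp add: divide_right_mono)
  have "ln (1 / real p ^ n * (\<Sum>w\<in>words p n. a w)) \<le> ln ((1 + c) * (1 / real p ^ n * (\<Sum>w\<in>words p n. b w)))"
    using ln_mono[OF le pos] .
  also have "\<dots> = ln (1 + c) + ln (1 / real p ^ n * (\<Sum>w\<in>words p n. b w))"
    using posb c p by (subst ln_mult) auto
  finally have L: "ln (1 / real p ^ n * (\<Sum>w\<in>words p n. a w)) \<le> ln (1 + c) + ln (1 / real p ^ n * (\<Sum>w\<in>words p n. b w))" .
  have "1 / real n * ln (1 / real p ^ n * (\<Sum>w\<in>words p n. a w)) \<le> 1 / real n * (ln (1 + c) + ln (1 / real p ^ n * (\<Sum>w\<in>words p n. b w)))"
    using L by (intro mult_left_mono) auto
  then show ?thesis by (simp add: algebra_simps)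
qed

lemma Lim_anti: fixes f :: "real \<Rightarrow> ereal"
  assumes anti: "\<And>a b. 0 < a \<Longrightarrow> a \<le> b \<Longrightarrow> f b \<le> f a"
  shows "Lim (at_right 0) f = (SUP e\<in>{0<..}. f e)"
proof (rule tendsto_Lim)
  show "\<not> trivial_limit (at_right (0::real))" by simp
  show "(f \<longlongrightarrow> (SUP e\<in>{0<..}. f e)) (at_right 0)"
  proof (rule order_tendstoI)
    fix a assume "a < (SUP e\<in>{0<..}. f e)"
    then obtain e0 where e0: "e0 > 0" "a < f e0" by (auto simp: less_SUP_iff)
    show "eventually (\<lambda>x. a < f x) (at_right 0)"
      unfolding eventually_at_right_field
    proof (intro exI[of _ e0] conjI allI impI)
      fix y :: real assume "0 < y" "y < e0"
      then show "a < f y" using anti[of y e0] e0 by auto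
    qed (use e0 in auto)
  next
    fix a assume a: "(SUP e\<in>{0<..}. f e) < a"
    show "eventually (\<lambda>x. f x < a) (at_right 0)"
      unfolding eventually_at_right_field
    proof (intro exI[of _ 1] conjI allI impI)
      fix y :: real assume "0 < y" "y < 1"
      then have "f y \<le> (SUP e\<in>{0<..}. f e)" by (intro SUP_upper) auto
      then show "f y < a" using a by auto
    qed auto
  qed
qed



context sys begin

definition Tsep where "Tsep K e n = 1 / real n * ln (1 / real p ^ n * (\<Sum>w\<in>words p n. real (sep_num g K w e)))"
definition Tspan where "Tspan K e n = 1 / real n * ln (1 / real p ^ n * (\<Sum>w\<in>words p n. real (span_num g K w e)))"

lemma htop_set_unfold: "htop_set g p K = Lim (at_right 0) (\<lambda>e. limsup (\<lambda>n. ereal (Tsep K e n)))"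
  by (simp add: htop_set_def Tsep_def)

lemma Bd_unfold: "Bd g p K e = limsup (\<lambda>n. ereal (Tspan K e n))"
  by (simp add: Bd_def Tspan_def)

lemma Tsep_anti: assumes K: "compact K" "K \<subseteq> X" "K \<noteq> {}" and e: "0 < e1" "e1 \<le> e2"
  shows "Tsep K e2 n \<le> Tsep K e1 n"
  unfolding Tsep_def
proof (rule avg_mono[OF p1])
  show "\<forall>w\<in>words p n. real (sep_num g K w e2) \<le> real (sep_num g K w e1)"
    using sep_anti[OF K(1,2) _ e] by simp
  show "\<forall>w\<in>words p n. 1 \<le> real (sep_num g K w e2)"
    using sep_pos[OF K] e by simp
qed

lemma Tspan_anti: assumes K: "compact K" "K \<subseteq> X" "K \<noteq> {}" and e: "0 < e1" "e1 \<le> e2"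
  shows "Tspan K e2 n \<le> Tspan K e1 n"
  unfolding Tspan_def
proof (rule avg_mono[OF p1])
  show "\<forall>w\<in>words p n. real (span_num g K w e2) \<le> real (span_num g K w e1)"
    using span_anti[OF K(1,2) _ e] by simp
  show "\<forall>w\<in>words p n. 1 \<le> real (span_num g K w e2)"
    using span_pos[OF K] e by simp
qed

lemma Tsep_ge_Tspan: assumes K: "compact K" "K \<subseteq> X" "K \<noteq> {}" and e: "0 < e"
  shows "Tspan K e n \<le> Tsep K e n"
  unfolding Tsep_def Tspan_def
proof (rule avg_mono[OF p1])
  show "\<forall>w\<in>words p n. real (span_num g K w e) \<le> real (sep_num g K w e)"
    using span_le_sep(1)[OF K(1,2) _ e] by simp
  show "\<forall>w\<in>words p n. 1 \<le> real (span_num g K w e)"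
    using span_pos[OF K] e by simp
qed

lemma htop_set_eq: assumes K: "compact K" "K \<subseteq> X" "K \<noteq> {}"
  shows "htop_set g p K = (SUP e\<in>{0<..}. limsup (\<lambda>n. ereal (Tsep K e n)))"
  unfolding htop_set_unfold
proof (rule Lim_anti)
  fix a b :: real assume "0 < a" "a \<le> b"
  then show "limsup (\<lambda>n. ereal (Tsep K b n)) \<le> limsup (\<lambda>n. ereal (Tsep K a n))"
    by (intro Limsup_mono always_eventually allI) (simp add: Tsep_anti[OF K])
qed

lemma Bd_anti: assumes K: "compact K" "K \<subseteq> X" "K \<noteq> {}" and e: "0 < e1" "e1 \<le> e2"
  shows "Bd g p K e2 \<le> Bd g p K e1"
  unfolding Bd_unfold
  by (intro Limsup_mono always_eventually allI) (simp add: Tspan_anti[OF K e])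

lemma nbhd_facts: assumes "x \<in> X" "compact_nbhd X K x"
  shows "compact K" "K \<subseteq> X" "K \<noteq> {}" "x \<in> K"
  using assms unfolding compact_nbhd_def by auto

lemma hd_anti: assumes x: "x \<in> X" and e: "0 < e1" "e1 \<le> e2"
  shows "hd_pt X g p x e2 \<le> hd_pt X g p x e1"
  unfolding hd_pt_def
proof (rule Inf_greatest)
  fix b assume "b \<in> {Bd g p K e1 |K. compact_nbhd X K x}"
  then obtain K where K: "compact_nbhd X K x" "b = Bd g p K e1" by blast
  have "Inf {Bd g p K e2 |K. compact_nbhd X K x} \<le> Bd g p K e2"
    by (rule Inf_lower) (use K in blast)
  also have "\<dots> \<le> Bd g p K e1"
    using Bd_anti[OF nbhd_facts(1-3)[OF x K(1)] e] .
  finally show "Inf {Bd g p K e2 |K. compact_nbhd X K x} \<le> b" using K(2) by simp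
qed

lemma htop_pt_eq: assumes x: "x \<in> X"
  shows "htop_pt X g p x = (SUP e\<in>{0<..}. hd_pt X g p x e)"
  unfolding htop_pt_def by (rule Lim_anti) (rule hd_anti[OF x])

lemma limsup_const_over_n: "limsup (\<lambda>n. ereal (c / real n)) = 0"
proof -
  have "(\<lambda>n. ereal (c / real n)) \<longlonglongrightarrow> ereal 0"
    by (intro tendsto_ereal lim_const_over_n)
  then have "limsup (\<lambda>n. ereal (c / real n)) = ereal 0"
    by (intro lim_imp_Limsup) simp_all
  then show ?thesis by (simp add: zero_ereal_def)
qed

lemma part1: assumes K: "K \<subseteq> X" "closed K" "x0 islimpt K" "\<forall>y. y islimpt K \<longrightarrow> y = x0"
  shows "htop_set g p K \<le> htop_pt X g p x0"
proof -
  have x0K: "x0 \<in> K" using K(2,3) closed_limpt by blast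
  have cK: "compact K" using compact_Int_closed[OF cX K(2)] K(1) by (simp add: Int_absorb1)
  have x0X: "x0 \<in> X" using x0K K(1) by blast
  have Kne: "K \<noteq> {}" using x0K by blast
  have main: "limsup (\<lambda>n. ereal (Tsep K (2*e) n)) \<le> hd_pt X g p x0 e" if e: "e > 0" for e
    unfolding hd_pt_def
  proof (rule Inf_greatest)
    fix b assume "b \<in> {Bd g p K' e |K'. compact_nbhd X K' x0}"
    then obtain K' where K': "compact_nbhd X K' x0" "b = Bd g p K' e" by blast
    note K'f = nbhd_facts[OF x0X K'(1)]
    obtain U where U: "open U" "x0 \<in> U" "U \<inter> X \<subseteq> K'" using K'(1) unfolding compact_nbhd_def by blast
    define F where "F = K - U"
    have finF: "finite F"
    proof (rule ccontr)
      assume inf: "infinite F"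
      have "compact F" unfolding F_def using compact_diff[OF cK U(1)] .
      then obtain y where y: "y \<in> F" "y islimpt F"
        using inf unfolding compact_eq_Bolzano_Weierstrass by blast
      have "y islimpt K" using islimpt_subset[OF y(2)] F_def by blast
      then have "y = x0" using K(4) by blast
      then show False using y(1) U(2) F_def by blast
    qed
    have cover: "K \<subseteq> K' \<union> F" using U(3) K(1) F_def by blast
    define c where "c = real (card F)"
    have pt: "Tsep K (2*e) n \<le> Tspan K' e n + ln (1 + c) / real n" for n
      unfolding Tsep_def Tspan_def
    proof (rule avg_add[OF p1])
      show "\<forall>w\<in>words p n. real (sep_num g K w (2 * e)) \<le> real (span_num g K' w e) + c"
      proof
        fix w assume w: "w \<in> words p n"
        have "sep_num g K w (2*e) \<le> span_num g K' w e + card F"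
          using key_sep_span[OF cK K(1) K'f(1,2) finF cover w e] .
        then show "real (sep_num g K w (2 * e)) \<le> real (span_num g K' w e) + c"
          unfolding c_def by linarith
      qed
      show "\<forall>w\<in>words p n. 1 \<le> real (sep_num g K w (2 * e))"
        using sep_pos[OF cK K(1) Kne] e by simp
      show "\<forall>w\<in>words p n. 1 \<le> real (span_num g K' w e)"
        using span_pos[OF K'f(1-3)] e by simp
      show "0 \<le> c" unfolding c_def by simp
    qed
    have "limsup (\<lambda>n. ereal (Tsep K (2*e) n)) \<le> limsup (\<lambda>n. ereal (Tspan K' e n) + ereal (ln (1 + c) / real n))"
      by (intro Limsup_mono always_eventually allI) (use pt in simp)
    also have "\<dots> \<le> limsup (\<lambda>n. ereal (Tspan K' e n)) + limsup (\<lambda>n. ereal (ln (1 + c) / real n))"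
      by (rule ereal_limsup_add_mono)
    also have "\<dots> = b" using K'(2) by (simp add: limsup_const_over_n Bd_unfold)
    finally show "limsup (\<lambda>n. ereal (Tsep K (2*e) n)) \<le> b" .
  qed
  show ?thesis
    unfolding htop_set_eq[OF cK K(1) Kne] htop_pt_eq[OF x0X]
  proof (rule SUP_least)
    fix e :: real assume "e \<in> {0<..}"
    then have e: "e > 0" by simp
    have "limsup (\<lambda>n. ereal (Tsep K e n)) = limsup (\<lambda>n. ereal (Tsep K (2*(e/2)) n))" by simp
    also have "\<dots> \<le> hd_pt X g p x0 (e/2)" using main[of "e/2"] e by simp
    also have "\<dots> \<le> (SUP e\<in>{0<..}. hd_pt X g p x0 e)" by (rule SUP_upper) (use e in simp)
    finally show "limsup (\<lambda>n. ereal (Tsep K e n)) \<le> (SUP e\<in>{0<..}. hd_pt X g p x0 e)" .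
  qed
qed

end


lemma arch_inv: "0 < (x::real) \<Longrightarrow> \<exists>k. 1 / real (Suc k) < x"
  using reals_Archimedean[of x] by (simp add: inverse_eq_divide)

lemma inv_Suc_mono: "k \<le> k' \<Longrightarrow> 1 / real (Suc k') \<le> 1 / real (Suc k)"
  by (simp add: frac_le)

context sys begin

lemma part2: assumes x0X: "x0 \<in> X" and lim: "x0 islimpt X"
  shows "\<exists>K. K \<subseteq> X \<and> countable K \<and> closed K \<and> x0 \<in> K \<and> x0 islimpt K \<and>
                 (\<forall>y. y islimpt K \<longrightarrow> y = x0) \<and> htop_pt X g p x0 = htop_set g p K"
proof -
  define Kk where "Kk k = X \<inter> cball x0 (1 / real (Suc k))" for k
  have cKk: "compact (Kk k)" for k unfolding Kk_def by (intro compact_Int_closed cX closed_cball)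
  have KkX: "Kk k \<subseteq> X" for k unfolding Kk_def by blast
  have x0Kk: "x0 \<in> Kk k" for k unfolding Kk_def using x0X by simp
  have Kkne: "Kk k \<noteq> {}" for k using x0Kk by blast
  have nbhd: "compact_nbhd X (Kk k) x0" for k
    unfolding compact_nbhd_def
  proof (intro conjI)
    show "\<exists>U. open U \<and> x0 \<in> U \<and> U \<inter> X \<subseteq> Kk k"
      by (intro exI[of _ "ball x0 (1 / real (Suc k))"]) (auto simp: Kk_def)
  qed (use cKk KkX in auto)
  define eps where "eps j = 1 / real (Suc j)" for j
  have eps_pos: "eps j > 0" for j unfolding eps_def by simp
  define hd where "hd j = hd_pt X g p x0 (eps j)" for j
  define y where "y k j = min (hd j) (ereal (real k)) - ereal (1 / real (Suc k))" for k j
  have ex_n: "\<exists>n\<ge>k. y k j \<le> ereal (Tsep (Kk k) (eps j) n)" for k j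
  proof -
    have "hd j \<le> Bd g p (Kk k) (eps j)" unfolding hd_def hd_pt_def
      by (rule Inf_lower) (use nbhd in blast)
    also have "\<dots> \<le> limsup (\<lambda>n. ereal (Tsep (Kk k) (eps j) n))" unfolding Bd_unfold
      by (intro Limsup_mono always_eventually allI) (simp add: Tsep_ge_Tspan[OF cKk KkX Kkne eps_pos])
    finally have hl: "hd j \<le> limsup (\<lambda>n. ereal (Tsep (Kk k) (eps j) n))" .
    show ?thesis
    proof (cases "min (hd j) (ereal (real k)) = -\<infinity>")
      case True
      then have "y k j = -\<infinity>" unfolding y_def by simp
      then show ?thesis by auto
    next
      case False
      have "min (hd j) (ereal (real k)) \<le> ereal (real k)" by simp
      with False obtain r where r: "min (hd j) (ereal (real k)) = ereal r"
        by (cases "min (hd j) (ereal (real k))") auto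
      have "y k j < min (hd j) (ereal (real k))" unfolding y_def r by simp
      also have "\<dots> \<le> hd j" by simp
      also note hl
      finally have "y k j < (INF N. SUP m\<in>{N..}. ereal (Tsep (Kk k) (eps j) m))"
        by (simp add: limsup_INF_SUP)
      also have "\<dots> \<le> (SUP m\<in>{k..}. ereal (Tsep (Kk k) (eps j) m))" by (rule INF_lower) simp
      finally obtain n where "n \<in> {k..}" "y k j < ereal (Tsep (Kk k) (eps j) n)"
        by (auto simp: less_SUP_iff)
      then show ?thesis by (intro exI[of _ n]) auto
    qed
  qed
  then have "\<forall>k j. \<exists>n. n \<ge> k \<and> y k j \<le> ereal (Tsep (Kk k) (eps j) n)" by blast
  then obtain nn where nn: "\<And>k j. nn k j \<ge> k \<and> y k j \<le> ereal (Tsep (Kk k) (eps j) (nn k j))"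
    by metis
  have "\<forall>k j w. \<exists>F. w \<in> words p (nn k j) \<longrightarrow> F \<subseteq> Kk k \<and> finite F \<and> separated g w (eps j) F \<and> card F = sep_num g (Kk k) w (eps j)"
    using sep_num_facts(1)[OF cKk KkX _ eps_pos] by blast
  then obtain E where E: "\<And>k j w. w \<in> words p (nn k j) \<Longrightarrow> E k j w \<subseteq> Kk k \<and> finite (E k j w) \<and> separated g w (eps j) (E k j w) \<and> card (E k j w) = sep_num g (Kk k) w (eps j)"
    by metis
  have "\<forall>k. \<exists>x. x \<in> X \<and> x \<noteq> x0 \<and> dist x x0 < 1 / real (Suc k)"
  proof
    fix k :: nat
    have pos: "(0::real) < 1 / real (Suc k)" by simp
    obtain x' where "x' \<in> X" "x' \<noteq> x0" "dist x' x0 < 1 / real (Suc k)"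
      using lim[unfolded islimpt_approachable, rule_format, OF pos] by blast
    then show "\<exists>x. x \<in> X \<and> x \<noteq> x0 \<and> dist x x0 < 1 / real (Suc k)" by blast
  qed
  then obtain xs where xs: "\<And>k. xs k \<in> X \<and> xs k \<noteq> x0 \<and> dist (xs k) x0 < 1 / real (Suc k)"
    by metis
  define A where "A k = insert (xs k) (\<Union>j\<le>k. \<Union>w\<in>words p (nn k j). E k j w)" for k
  have A_fin: "finite (A k)" for k unfolding A_def using E words_finite by auto
  have A_sub: "A k \<subseteq> Kk k" for k
  proof -
    have "xs k \<in> Kk k" using xs[of k] unfolding Kk_def by (simp add: dist_commute less_imp_le)
    then show ?thesis unfolding A_def using E by blast
  qed
  define K where "K = insert x0 (\<Union>k. A k)"
  have KX: "K \<subseteq> X" unfolding K_def using A_sub KkX x0X by blast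
  have cntK: "countable K" unfolding K_def using A_fin by (auto intro: countable_finite)
  have limK: "\<forall>z. z islimpt K \<longrightarrow> z = x0"
  proof (intro allI impI)
    fix z assume z: "z islimpt K"
    show "z = x0"
    proof (rule ccontr)
      assume ne: "z \<noteq> x0"
      define r where "r = dist z x0"
      have r: "r > 0" using ne unfolding r_def by simp
      obtain k0 where k0: "1 / real (Suc k0) < r / 2" using arch_inv[of "r/2"] r by auto
      define C where "C = insert x0 (\<Union>k<k0. A k)"
      define D where "D = {x. r/2 \<le> dist z x}"
      have "K \<subseteq> C \<union> D"
      proof
        fix x assume "x \<in> K"
        then consider "x = x0" | k where "x \<in> A k" unfolding K_def by blast
        then show "x \<in> C \<union> D"
        proof cases
          case 1 then show ?thesis unfolding C_def by blast
        next
          case (2 k)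
          show ?thesis
          proof (cases "k < k0")
            case True then show ?thesis using 2 unfolding C_def by blast
          next
            case False
            have "x \<in> Kk k" using 2 A_sub by blast
            then have "dist x0 x \<le> 1 / real (Suc k)" unfolding Kk_def by simp
            also have "\<dots> \<le> 1 / real (Suc k0)" using False by (intro inv_Suc_mono) simp
            finally have "dist x0 x < r/2" using k0 by simp
            moreover have "r \<le> dist z x + dist x0 x" unfolding r_def
              using dist_triangle[of z x0 x] by (simp add: dist_commute)
            ultimately have "r/2 \<le> dist z x" by simp
            then show ?thesis unfolding D_def by blast
          qed
        qed
      qed
      then have "z islimpt (C \<union> D)" using islimpt_subset[OF z] by blast
      moreover have "finite C" unfolding C_def using A_fin by simp
      then have "\<not> z islimpt C" by (rule islimpt_finite)
      moreover have "\<not> z islimpt D"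
      proof
        assume "z islimpt D"
        then obtain x where "x \<in> D" "dist x z < r/2" using r unfolding islimpt_approachable
          by (metis half_gt_zero)
        then show False unfolding D_def by (simp add: dist_commute)
      qed
      ultimately show False using islimpt_Un by blast
    qed
  qed
  have x0K: "x0 \<in> K" unfolding K_def by blast
  have clK: "closed K" unfolding closed_limpt using limK x0K by blast
  have x0lim: "x0 islimpt K" unfolding islimpt_approachable
  proof (intro allI impI)
    fix e :: real assume e: "e > 0"
    obtain k where k: "1 / real (Suc k) < e" using arch_inv[OF e] by blast
    have "xs k \<in> K" unfolding K_def A_def by blast
    then show "\<exists>x'\<in>K. x' \<noteq> x0 \<and> dist x' x0 < e" using xs[of k] k by force
  qed
  have cK: "compact K" using compact_Int_closed[OF cX clK] KX by (simp add: Int_absorb1)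
  have Kne: "K \<noteq> {}" using x0K by blast
  have le1: "htop_set g p K \<le> htop_pt X g p x0" using part1[OF KX clK x0lim limK] .
  have step: "y k j \<le> ereal (Tsep K (eps j) (nn k j))" if jk: "j \<le> k" for j k
  proof -
    have "Tsep (Kk k) (eps j) (nn k j) \<le> Tsep K (eps j) (nn k j)"
      unfolding Tsep_def
    proof (rule avg_mono[OF p1])
      show "\<forall>w\<in>words p (nn k j). real (sep_num g (Kk k) w (eps j)) \<le> real (sep_num g K w (eps j))"
      proof
        fix w assume w: "w \<in> words p (nn k j)"
        have "E k j w \<subseteq> A k" unfolding A_def using w jk by blast
        then have sub: "E k j w \<subseteq> K" unfolding K_def by blast
        have "card (E k j w) \<le> sep_num g K w (eps j)"
          using sep_num_facts(2)[OF cK KX w eps_pos sub] E[OF w] by blast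
        then show "real (sep_num g (Kk k) w (eps j)) \<le> real (sep_num g K w (eps j))"
          using E[OF w] by simp
      qed
      show "\<forall>w\<in>words p (nn k j). 1 \<le> real (sep_num g (Kk k) w (eps j))"
        using sep_pos[OF cKk KkX Kkne _ eps_pos] by simp
    qed
    then show ?thesis using nn[of k j] by (meson ereal_less_eq(3) order_trans)
  qed
  have hdle: "hd j \<le> limsup (\<lambda>n. ereal (Tsep K (eps j) n))" for j
  proof (rule dense_le)
    fix z assume z: "z < hd j"
    show "z \<le> limsup (\<lambda>n. ereal (Tsep K (eps j) n))"
    proof (cases z)
      case MInf then show ?thesis by simp
    next
      case PInf then show ?thesis using z by simp
    next
      case (real s)
      obtain t where t: "z < ereal t" "ereal t < hd j" using ereal_dense2[OF z] by blast
      have st: "s < t" using t(1) real by simp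
      obtain k1 :: nat where k1: "t \<le> real k1" using real_arch_simple by blast
      obtain k2 where k2: "1 / real (Suc k2) < t - s" using arch_inv[of "t - s"] st by auto
      have big: "z \<le> y k j" if kk: "k \<ge> max k1 k2" for k
      proof -
        have "ereal t \<le> ereal (real k)" using k1 kk by simp
        then have tm: "ereal t \<le> min (hd j) (ereal (real k))" using t(2) by simp
        have "1 / real (Suc k) \<le> 1 / real (Suc k2)" using kk by (intro inv_Suc_mono) simp
        then have "s \<le> t - 1 / real (Suc k)" using k2 by simp
        then have "z \<le> ereal t - ereal (1 / real (Suc k))" using real by simp
        also have "\<dots> \<le> y k j" unfolding y_def by (rule ereal_minus_mono[OF tm]) simp
        finally show ?thesis .
      qed
      show ?thesis unfolding limsup_INF_SUP
      proof (rule INF_greatest)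
        fix N :: nat assume "N \<in> UNIV"
        define k where "k = max (max N j) (max k1 k2)"
        have "z \<le> y k j" using big[of k] unfolding k_def by simp
        also have "\<dots> \<le> ereal (Tsep K (eps j) (nn k j))" using step[of j k] unfolding k_def by simp
        also have "\<dots> \<le> (SUP m\<in>{N..}. ereal (Tsep K (eps j) m))"
        proof (rule SUP_upper)
          show "nn k j \<in> {N..}" using nn[of k j] unfolding k_def by simp
        qed
        finally show "z \<le> (SUP m\<in>{N..}. ereal (Tsep K (eps j) m))" .
      qed
    qed
  qed
  have le2: "htop_pt X g p x0 \<le> htop_set g p K"
    unfolding htop_pt_eq[OF x0X] htop_set_eq[OF cK KX Kne]
  proof (rule SUP_least)
    fix e :: real assume "e \<in> {0<..}"
    then have e: "e > 0" by simp
    obtain j where j: "eps j < e" using arch_inv[OF e] unfolding eps_def by blast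
    have "hd_pt X g p x0 e \<le> hd j" unfolding hd_def using hd_anti[OF x0X eps_pos] j by simp
    also have "\<dots> \<le> limsup (\<lambda>n. ereal (Tsep K (eps j) n))" by (rule hdle)
    also have "\<dots> \<le> (SUP e\<in>{0<..}. limsup (\<lambda>n. ereal (Tsep K e n)))"
      by (rule SUP_upper) (simp add: eps_pos)
    finally show "hd_pt X g p x0 e \<le> (SUP e\<in>{0<..}. limsup (\<lambda>n. ereal (Tsep K e n)))" .
  qed
  have eq: "htop_pt X g p x0 = htop_set g p K" using antisym[OF le2 le1] .
  show ?thesis
    using KX cntK clK x0K x0lim limK eq by blast
qed

end

theorem mainTheorem10:
  fixes X :: "'a::metric_space set" and g :: "nat \<Rightarrow> 'a \<Rightarrow> 'a" and p :: nat
  assumes "compact X" and "p \<ge> 1"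
    and "\<And>i. i < p \<Longrightarrow> continuous_on X (g i) \<and> g i ` X \<subseteq> X"
  shows "(\<forall>K x0. K \<subseteq> X \<and> countable K \<and> closed K \<and> x0 islimpt K \<and>
              (\<forall>y. y islimpt K \<longrightarrow> y = x0)
            \<longrightarrow> htop_pt X g p x0 \<ge> htop_set g p K)
       \<and> (\<forall>x0\<in>X. x0 islimpt X \<longrightarrow>
            (\<exists>K. K \<subseteq> X \<and> countable K \<and> closed K \<and> x0 \<in> K \<and> x0 islimpt K \<and>
                 (\<forall>y. y islimpt K \<longrightarrow> y = x0) \<and> htop_pt X g p x0 = htop_set g p K))"
proof -
  interpret sys X g p
    by unfold_locales (use assms in auto)
  have 1: "\<forall>K x0. K \<subseteq> X \<and> countable K \<and> closed K \<and> x0 islimpt K \<and>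
              (\<forall>y. y islimpt K \<longrightarrow> y = x0)
            \<longrightarrow> htop_pt X g p x0 \<ge> htop_set g p K"
  proof (intro allI impI)
    fix K x0 assume h: "K \<subseteq> X \<and> countable K \<and> closed K \<and> x0 islimpt K \<and> (\<forall>y. y islimpt K \<longrightarrow> y = x0)"
    show "htop_pt X g p x0 \<ge> htop_set g p K"
      using part1[of K x0] h by blast
  qed
  have 2: "\<forall>x0\<in>X. x0 islimpt X \<longrightarrow>
            (\<exists>K. K \<subseteq> X \<and> countable K \<and> closed K \<and> x0 \<in> K \<and> x0 islimpt K \<and>
                 (\<forall>y. y islimpt K \<longrightarrow> y = x0) \<and> htop_pt X g p x0 = htop_set g p K)"
    using part2 by blast
  from 1 2 show ?thesis by blast
qed

end
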